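(* Let $A$ be a unital ring and $n\in\mathbb N$. Then $\operatorname{sr}(A)\le n$ if and only if the skew corner $1_A M_n(A)=1_AM_n(A)(n\cdot 1_A)$ has stable rank $1$ (in the sense of skew corners).
   Context: For idempotents $p,q$ in a unital ring $R$, the skew corner $pRq$ has (right) stable rank $1$, written $\operatorname{sr}(pRq)=1$, if whenever $a\in pRq$, $x\in qRp$, $b\in pRp$ satisfy $ax+b=p$, there exist $y\in pRq$, $z\in qRp$ with $(a+by)z=p$. $M_n(A)$ is identified with the upper left $n\times n$ corner of $M_{n+m}(A)$; in particular $A=M_1(A)$ sits in $M_n(A)$ as the corner at the matrix unit $e_{11}$, so $1_A=e_{11}$, and $n\cdot 1_A=\mathrm{diag}(1,\dots,1)$ is the identity of $M_n(A)$. The (Bass) stable rank $\operatorname{sr}(A)$ is the least positive integer $n$ such that for every $(a_1,\dots,a_n,b)\in A^{n+1}$ with $\sum a_iA+bA=A$ there exist $c_i\in A$ with $\sum_i (a_i+bc_i)A=A$, or $\infty$ if none exists. *)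

theory Defs
  imports "Jordan_Normal_Form.Matrix" "HOL-Library.Extended_Nat"
begin

definition bass_cond :: "'a::ring_1 itself \<Rightarrow> nat \<Rightarrow> bool" where
  "bass_cond T m \<longleftrightarrow>
     (\<forall>(a::nat \<Rightarrow> 'a) (b::'a).
        (\<exists>r s. (\<Sum>i<m. a i * r i) + b * s = 1) \<longrightarrow>
        (\<exists>c r. (\<Sum>i<m. (a i + b * c i) * r i) = 1))"

definition stable_rank :: "'a::ring_1 itself \<Rightarrow> enat" where
  "stable_rank T = (if \<exists>m\<ge>1. bass_cond T m
                     then enat (LEAST m. m \<ge> 1 \<and> bass_cond T m) else \<infinity>)"

(* the matrix unit e_11 in M_n(A), i.e. 1_A sitting in the corner *)
definition e11 :: "nat \<Rightarrow> 'a::ring_1 mat" where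
  "e11 n = mat n n (\<lambda>(i,j). if i = 0 \<and> j = 0 then 1 else 0)"

definition corner :: "nat \<Rightarrow> 'a::ring_1 mat \<Rightarrow> 'a mat \<Rightarrow> 'a mat set" where
  "corner n p q = {p * r * q | r. r \<in> carrier_mat n n}"

definition sr1_skew_corner :: "nat \<Rightarrow> 'a::ring_1 mat \<Rightarrow> 'a mat \<Rightarrow> bool" where
  "sr1_skew_corner n p q \<longleftrightarrow>
     (\<forall>a\<in>corner n p q. \<forall>x\<in>corner n q p. \<forall>b\<in>corner n p p.
        a * x + b = p \<longrightarrow>
        (\<exists>y\<in>corner n p q. \<exists>z\<in>corner n q p. (a + b * y) * z = p))"

end

theory Submission
  imports Defs
begin

lemma mult_entry:
  assumes "A \<in> carrier_mat n n" "B \<in> carrier_mat n n" "i < n" "j < n"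
  shows "(A * B) $$ (i,j) = (\<Sum>k<n. A $$ (i,k) * B $$ (k,j))"
  using assms by (simp add: index_mult_mat scalar_prod_def atLeast0LessThan)

definition rowm :: "nat \<Rightarrow> 'a::ring_1 mat \<Rightarrow> bool" where
  "rowm n M \<longleftrightarrow> M \<in> carrier_mat n n \<and> (\<forall>i<n. \<forall>j<n. i \<noteq> 0 \<longrightarrow> M $$ (i,j) = 0)"
definition colm :: "nat \<Rightarrow> 'a::ring_1 mat \<Rightarrow> bool" where
  "colm n M \<longleftrightarrow> M \<in> carrier_mat n n \<and> (\<forall>i<n. \<forall>j<n. j \<noteq> 0 \<longrightarrow> M $$ (i,j) = 0)"
definition sclm :: "nat \<Rightarrow> 'a::ring_1 mat \<Rightarrow> bool" where
  "sclm n M \<longleftrightarrow> M \<in> carrier_mat n n \<and> (\<forall>i<n. \<forall>j<n. (i \<noteq> 0 \<or> j \<noteq> 0) \<longrightarrow> M $$ (i,j) = 0)"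

lemma e11_carrier[simp]: "e11 n \<in> carrier_mat n n"
  by (simp add: e11_def)

lemma e11_dims[simp]: "dim_row (e11 n) = n" "dim_col (e11 n) = n"
  by (simp_all add: e11_def)

lemma e11_entry[simp]: "i < n \<Longrightarrow> j < n \<Longrightarrow> e11 n $$ (i,j) = (if i = 0 \<and> j = 0 then 1 else 0)"
  by (simp add: e11_def)

lemma e11_mult_carrier[simp]:
  "r \<in> carrier_mat n n \<Longrightarrow> e11 n * r \<in> carrier_mat n n"
  "r \<in> carrier_mat n n \<Longrightarrow> r * e11 n \<in> carrier_mat n n"
  by (rule mult_carrier_mat[OF e11_carrier], assumption)
     (rule mult_carrier_mat[OF _ e11_carrier], assumption)

lemma e11_left:
  assumes "M \<in> carrier_mat n n" "i < n" "j < n"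
  shows "(e11 n * M) $$ (i,j) = (if i = 0 then M $$ (0,j) else 0)"
proof -
  have "(e11 n * M) $$ (i,j) = (\<Sum>k<n. (if i = 0 \<and> k = 0 then 1 else 0) * M $$ (k,j))"
    using mult_entry[OF e11_carrier assms] assms by simp
  also have "\<dots> = (\<Sum>k<n. if k = 0 then (if i = 0 then M $$ (0,j) else 0) else 0)"
    by (rule sum.cong) auto
  also have "\<dots> = (if i = 0 then M $$ (0,j) else 0)"
    using assms by simp
  finally show ?thesis .
qed

lemma e11_right:
  assumes "M \<in> carrier_mat n n" "i < n" "j < n"
  shows "(M * e11 n) $$ (i,j) = (if j = 0 then M $$ (i,0) else 0)"
proof -
  have "(M * e11 n) $$ (i,j) = (\<Sum>k<n. M $$ (i,k) * (if k = 0 \<and> j = 0 then 1 else 0))"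
    using mult_entry[OF assms(1) e11_carrier assms(2,3)] assms by simp
  also have "\<dots> = (\<Sum>k<n. if k = 0 then (if j = 0 then M $$ (i,0) else 0) else 0)"
    by (rule sum.cong) auto
  also have "\<dots> = (if j = 0 then M $$ (i,0) else 0)"
    using assms by simp
  finally show ?thesis .
qed

lemma corner_row: "M \<in> corner n (e11 n) (1\<^sub>m n) \<longleftrightarrow> rowm n M"
proof
  assume "M \<in> corner n (e11 n) (1\<^sub>m n)"
  then obtain r where r: "r \<in> carrier_mat n n" "M = e11 n * r * 1\<^sub>m n"
    unfolding corner_def by blast
  then have M: "M = e11 n * r" by simp
  show "rowm n M" unfolding rowm_def M using r(1) by (simp add: e11_left mult_carrier_mat del: index_mult_mat)
next
  assume R: "rowm n M"
  hence C: "M \<in> carrier_mat n n" by (simp add: rowm_def)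
  have "e11 n * M = M"
    by (rule eq_matI) (use R C in \<open>auto simp: e11_left rowm_def simp del: index_mult_mat(1)\<close>)
  hence "M = e11 n * M * 1\<^sub>m n" using C by simp
  thus "M \<in> corner n (e11 n) (1\<^sub>m n)" unfolding corner_def using C by blast
qed

lemma corner_col: "M \<in> corner n (1\<^sub>m n) (e11 n) \<longleftrightarrow> colm n M"
proof
  assume "M \<in> corner n (1\<^sub>m n) (e11 n)"
  then obtain r where r: "r \<in> carrier_mat n n" "M = 1\<^sub>m n * r * e11 n"
    unfolding corner_def by blast
  then have M: "M = r * e11 n" by simp
  show "colm n M" unfolding colm_def M using r(1) by (simp add: e11_right del: index_mult_mat)
next
  assume R: "colm n M"
  hence C: "M \<in> carrier_mat n n" by (simp add: colm_def)
  have "M * e11 n = M"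
    by (rule eq_matI) (use R C in \<open>auto simp: e11_right colm_def simp del: index_mult_mat(1)\<close>)
  hence "M = 1\<^sub>m n * M * e11 n" using C by simp
  thus "M \<in> corner n (1\<^sub>m n) (e11 n)" unfolding corner_def using C by blast
qed

lemma corner_scl: "M \<in> corner n (e11 n) (e11 n) \<longleftrightarrow> sclm n M"
proof
  assume "M \<in> corner n (e11 n) (e11 n)"
  then obtain r where r: "r \<in> carrier_mat n n" "M = e11 n * r * e11 n"
    unfolding corner_def by blast
  show "sclm n M" unfolding sclm_def r(2) using r(1)
    by (simp add: e11_left e11_right mult_carrier_mat del: index_mult_mat)
next
  assume R: "sclm n M"
  hence C: "M \<in> carrier_mat n n" by (simp add: sclm_def)
  have "e11 n * M * e11 n = M"
    by (rule eq_matI) (use R C in \<open>auto simp: e11_left e11_right sclm_def mult_carrier_mat simp del: index_mult_mat(1)\<close>)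
  hence "M = e11 n * M * e11 n" by simp
  thus "M \<in> corner n (e11 n) (e11 n)" unfolding corner_def using C by blast
qed

lemma row_col_prod:
  assumes "rowm n A" "colm n X" "i < n" "j < n"
  shows "(A * X) $$ (i,j) = (if i = 0 \<and> j = 0 then (\<Sum>k<n. A $$ (0,k) * X $$ (k,0)) else 0)"
proof -
  have "(A * X) $$ (i,j) = (\<Sum>k<n. A $$ (i,k) * X $$ (k,j))"
    using assms by (simp add: rowm_def colm_def mult_entry del: index_mult_mat)
  then show ?thesis using assms by (auto simp: rowm_def colm_def)
qed

lemma scl_row_prod:
  assumes "sclm n B" "rowm n Y" "j < n"
  shows "(B * Y) $$ (0,j) = B $$ (0,0) * Y $$ (0,j)"
proof -
  have n: "0 < n" using assms by auto
  have "(B * Y) $$ (0,j) = (\<Sum>k<n. B $$ (0,k) * Y $$ (k,j))"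
    using assms n by (simp add: sclm_def rowm_def mult_entry del: index_mult_mat)
  also have "\<dots> = (\<Sum>k<n. if k = 0 then B $$ (0,0) * Y $$ (0,j) else 0)"
    by (rule sum.cong) (use assms in \<open>auto simp: sclm_def\<close>)
  also have "\<dots> = B $$ (0,0) * Y $$ (0,j)" using n by simp
  finally show ?thesis .
qed

lemma rowm_add: "rowm n A \<Longrightarrow> rowm n C \<Longrightarrow> rowm n (A + C)"
  by (auto simp: rowm_def)

lemma scl_row_rowm:
  assumes "sclm n B" "rowm n Y"
  shows "rowm n (B * Y)"
proof -
  have h: "(B * Y) $$ (i,j) = 0" if "i < n" "j < n" "i \<noteq> 0" for i j
  proof -
    have "(B * Y) $$ (i,j) = (\<Sum>k<n. B $$ (i,k) * Y $$ (k,j))"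
      by (rule mult_entry) (use assms that in \<open>auto simp: sclm_def rowm_def\<close>)
    also have "\<dots> = 0" using assms that by (simp add: sclm_def)
    finally show ?thesis .
  qed
  thus ?thesis using assms h by (auto simp: rowm_def sclm_def mult_carrier_mat simp del: index_mult_mat(1))
qed

lemma key_entry:
  assumes "rowm n A" "sclm n B" "rowm n Y" "k < n"
  shows "(A + B * Y) $$ (0,k) = A $$ (0,k) + B $$ (0,0) * Y $$ (0,k)"
proof -
  have "(A + B * Y) $$ (0,k) = A $$ (0,k) + (B * Y) $$ (0,k)"
    using assms by (auto simp: rowm_def sclm_def simp del: index_mult_mat(1))
  thus ?thesis using scl_row_prod[OF assms(2,3,4)] by simp
qed

lemma sr1_iff_bass:
  assumes n: "n \<ge> 1"
  shows "sr1_skew_corner n (e11 n :: 'a::ring_1 mat) (1\<^sub>m n) \<longleftrightarrow> bass_cond TYPE('a) n"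
proof
  assume S: "sr1_skew_corner n (e11 n :: 'a::ring_1 mat) (1\<^sub>m n)"
  show "bass_cond TYPE('a) n"
    unfolding bass_cond_def
  proof (intro allI impI)
    fix a :: "nat \<Rightarrow> 'a" and b :: 'a
    assume "\<exists>r s. (\<Sum>i<n. a i * r i) + b * s = 1"
    then obtain r s where rs: "(\<Sum>i<n. a i * r i) + b * s = 1" by blast
    define A :: "'a mat" where "A = mat n n (\<lambda>(i,j). if i = 0 then a j else 0)"
    define X :: "'a mat" where "X = mat n n (\<lambda>(i,j). if j = 0 then r i else 0)"
    define B :: "'a mat" where "B = mat n n (\<lambda>(i,j). if i = 0 \<and> j = 0 then b * s else 0)"
    have RA: "rowm n A" by (simp add: rowm_def A_def)
    have CX: "colm n X" by (simp add: colm_def X_def)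
    have SB: "sclm n B" by (simp add: sclm_def B_def)
    have n0: "0 < n" using n by simp
    have sumeq: "(\<Sum>k<n. A $$ (0,k) * X $$ (k,0)) = (\<Sum>i<n. a i * r i)"
      by (rule sum.cong) (use n0 in \<open>auto simp: A_def X_def\<close>)
    have eq: "A * X + B = e11 n"
    proof (rule eq_matI)
      fix i j assume ij: "i < dim_row (e11 n :: 'a mat)" "j < dim_col (e11 n :: 'a mat)"
      hence ij': "i < n" "j < n" by auto
      have "(A * X + B) $$ (i,j) = (A * X) $$ (i,j) + B $$ (i,j)"
        using ij' by (simp add: B_def del: index_mult_mat(1))
      also have "\<dots> = e11 n $$ (i,j)"
        using row_col_prod[OF RA CX ij'] ij' sumeq rs by (simp add: B_def)
      finally show "(A * X + B) $$ (i,j) = e11 n $$ (i,j)" .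
    qed (use RA CX in \<open>auto simp: rowm_def colm_def B_def\<close>)
    obtain y z where y: "y \<in> corner n (e11 n) (1\<^sub>m n)" and z: "z \<in> corner n (1\<^sub>m n) (e11 n)"
      and yz: "(A + B * y) * z = e11 n"
      using S eq RA CX SB unfolding sr1_skew_corner_def corner_row corner_col corner_scl
      by (metis corner_row corner_col corner_scl)
    have Ry: "rowm n y" and Cz: "colm n z" using y z corner_row corner_col by auto
    have R2: "rowm n (A + B * y)" using rowm_add[OF RA scl_row_rowm[OF SB Ry]] .
    have "((A + B * y) * z) $$ (0,0) = 1" using yz n0 by simp
    hence "(\<Sum>k<n. (A + B * y) $$ (0,k) * z $$ (k,0)) = 1"
      using row_col_prod[OF R2 Cz n0 n0] by simp
    moreover have "(\<Sum>k<n. (A + B * y) $$ (0,k) * z $$ (k,0))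
        = (\<Sum>k<n. (a k + b * (s * y $$ (0,k))) * z $$ (k,0))"
    proof (rule sum.cong)
      fix k assume "k \<in> {..<n}"
      hence k: "k < n" by simp
      have "A $$ (0,k) = a k" "B $$ (0,0) = b * s" using k n0 by (auto simp: A_def B_def)
      thus "(A + B * y) $$ (0,k) * z $$ (k,0) = (a k + b * (s * y $$ (0,k))) * z $$ (k,0)"
        using key_entry[OF RA SB Ry k] by (simp add: mult.assoc)
    qed simp
    ultimately show "\<exists>c r. (\<Sum>i<n. (a i + b * c i) * r i) = 1"
      by (intro exI[of _ "\<lambda>k. s * y $$ (0,k)"] exI[of _ "\<lambda>k. z $$ (k,0)"]) simp
  qed
next
  assume Bc: "bass_cond TYPE('a) n"
  have n0: "0 < n" using n by simp
  show "sr1_skew_corner n (e11 n :: 'a::ring_1 mat) (1\<^sub>m n)"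
    unfolding sr1_skew_corner_def
  proof (intro ballI impI)
    fix a x b :: "'a mat"
    assume a: "a \<in> corner n (e11 n) (1\<^sub>m n)" and x: "x \<in> corner n (1\<^sub>m n) (e11 n)"
      and b: "b \<in> corner n (e11 n) (e11 n)" and eq: "a * x + b = e11 n"
    have Ra: "rowm n a" using a corner_row by blast
    have Cx: "colm n x" using x corner_col by blast
    have Sb: "sclm n b" using b corner_scl by blast
    have "(a * x + b) $$ (0,0) = 1" using eq n0 by simp
    hence "(a * x) $$ (0,0) + b $$ (0,0) = 1"
    proof -
      have "dim_row b = n" "dim_col b = n" using Sb by (auto simp: sclm_def)
      thus ?thesis using \<open>(a * x + b) $$ (0,0) = 1\<close> n0 by (simp del: index_mult_mat(1))
    qed
    hence "(\<Sum>k<n. a $$ (0,k) * x $$ (k,0)) + b $$ (0,0) * 1 = 1"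
      using row_col_prod[OF Ra Cx n0 n0] by simp
    hence "\<exists>r s. (\<Sum>i<n. (\<lambda>i. a $$ (0,i)) i * r i) + b $$ (0,0) * s = 1"
      by (intro exI[of _ "\<lambda>k. x $$ (k,0)"] exI[of _ 1]) simp
    from Bc[unfolded bass_cond_def, rule_format, OF this]
    obtain c rr where crr: "(\<Sum>i<n. (a $$ (0,i) + b $$ (0,0) * c i) * rr i) = 1"
      by auto
    define Y :: "'a mat" where "Y = mat n n (\<lambda>(i,j). if i = 0 then c j else 0)"
    define Z :: "'a mat" where "Z = mat n n (\<lambda>(i,j). if j = 0 then rr i else 0)"
    have RY: "rowm n Y" by (simp add: rowm_def Y_def)
    have CZ: "colm n Z" by (simp add: colm_def Z_def)
    have R2: "rowm n (a + b * Y)" using rowm_add[OF Ra scl_row_rowm[OF Sb RY]] .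
    have sumeq: "(\<Sum>k<n. (a + b * Y) $$ (0,k) * Z $$ (k,0)) = 1"
    proof -
      have "(\<Sum>k<n. (a + b * Y) $$ (0,k) * Z $$ (k,0))
          = (\<Sum>i<n. (a $$ (0,i) + b $$ (0,0) * c i) * rr i)"
      proof (rule sum.cong)
        fix k assume "k \<in> {..<n}"
        hence k: "k < n" by simp
        have "Y $$ (0,k) = c k" "Z $$ (k,0) = rr k" using k n0 by (auto simp: Y_def Z_def)
        thus "(a + b * Y) $$ (0,k) * Z $$ (k,0) = (a $$ (0,k) + b $$ (0,0) * c k) * rr k"
          using key_entry[OF Ra Sb RY k] by simp
      qed simp
      thus ?thesis using crr by simp
    qed
    have "(a + b * Y) * Z = e11 n"
    proof (rule eq_matI)
      fix i j assume ij: "i < dim_row (e11 n :: 'a mat)" "j < dim_col (e11 n :: 'a mat)"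
      hence ij': "i < n" "j < n" by auto
      show "((a + b * Y) * Z) $$ (i,j) = e11 n $$ (i,j)"
        using row_col_prod[OF R2 CZ ij'] ij' sumeq by simp
    qed (use R2 CZ in \<open>auto simp: rowm_def colm_def\<close>)
    moreover have "Y \<in> corner n (e11 n) (1\<^sub>m n)" using RY corner_row by blast
    moreover have "Z \<in> corner n (1\<^sub>m n) (e11 n)" using CZ corner_col by blast
    ultimately show "\<exists>y\<in>corner n (e11 n) (1\<^sub>m n). \<exists>z\<in>corner n (1\<^sub>m n) (e11 n). (a + b * y) * z = e11 n"
      by blast
  qed
qed

lemma bass_mono:
  assumes B: "bass_cond TYPE('a::ring_1) m"
  shows "bass_cond TYPE('a) (Suc m)"
  unfolding bass_cond_def
proof (intro allI impI)
  fix a :: "nat \<Rightarrow> 'a" and b :: 'a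
  assume "\<exists>r s. (\<Sum>i<Suc m. a i * r i) + b * s = 1"
  then obtain r s where rs: "(\<Sum>i<Suc m. a i * r i) + b * s = 1" by blast
  define b' where "b' = a m * r m + b * s"
  have "(\<Sum>i<m. a i * r i) + b' * 1 = 1" using rs by (simp add: b'_def add.assoc)
  then obtain c t where ct: "(\<Sum>i<m. (a i + b' * c i) * t i) = 1"
    using B unfolding bass_cond_def by blast
  define c' where "c' = (\<lambda>i. if i < m then s * c i else 0)"
  define t' where "t' = (\<lambda>i. if i < m then t i else (\<Sum>i<m. r m * c i * t i))"
  have "(\<Sum>i<Suc m. (a i + b * c' i) * t' i)
      = (\<Sum>i<m. (a i + b * (s * c i)) * t i) + a m * (\<Sum>i<m. r m * c i * t i)"
    by (simp add: c'_def t'_def)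
  also have "\<dots> = (\<Sum>i<m. (a i + b * (s * c i)) * t i + a m * (r m * c i * t i))"
    by (simp add: sum_distrib_left sum.distrib)
  also have "\<dots> = (\<Sum>i<m. (a i + b' * c i) * t i)"
    by (rule sum.cong) (simp_all add: b'_def algebra_simps)
  also have "\<dots> = 1" by (rule ct)
  finally show "\<exists>c r. (\<Sum>i<Suc m. (a i + b * c i) * r i) = 1" by blast
qed

lemma bass_mono_le:
  assumes "bass_cond TYPE('a::ring_1) m" "m \<le> k"
  shows "bass_cond TYPE('a) k"
  using assms(2,1)
proof (induction k rule: dec_induct)
  case base then show ?case by simp
next
  case (step k) then show ?case using bass_mono by blast
qed

theorem lemma1:
  fixes n :: nat
  assumes "n \<ge> 1"
  shows "stable_rank TYPE('a::ring_1) \<le> enat n \<longleftrightarrow>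
         sr1_skew_corner n (e11 n :: 'a mat) (1\<^sub>m n)"
proof -
  have "stable_rank TYPE('a) \<le> enat n \<longleftrightarrow> bass_cond TYPE('a) n"
  proof
    assume le: "stable_rank TYPE('a) \<le> enat n"
    show "bass_cond TYPE('a) n"
    proof (cases "\<exists>m\<ge>1. bass_cond TYPE('a) m")
      case True
      define L where "L = (LEAST m. m \<ge> 1 \<and> bass_cond TYPE('a) m)"
      have L: "L \<ge> 1 \<and> bass_cond TYPE('a) L"
        unfolding L_def by (rule LeastI_ex) (use True in blast)
      have "enat L \<le> enat n" using le True by (simp add: stable_rank_def L_def)
      hence "L \<le> n" by simp
      thus ?thesis using bass_mono_le L by blast
    next
      case False
      have "stable_rank TYPE('a) = \<infinity>" unfolding stable_rank_def using False by (rule if_not_P)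
      then show ?thesis using le by simp
    qed
  next
    assume bn: "bass_cond TYPE('a) n"
    hence ex: "\<exists>m\<ge>1. bass_cond TYPE('a) m" using assms by blast
    have "(LEAST m. m \<ge> 1 \<and> bass_cond TYPE('a) m) \<le> n"
      by (rule Least_le) (use bn assms in simp)
    thus "stable_rank TYPE('a) \<le> enat n" using ex by (simp add: stable_rank_def)
  qed
  also have "\<dots> \<longleftrightarrow> sr1_skew_corner n (e11 n :: 'a mat) (1\<^sub>m n)"
    by (rule sr1_iff_bass[OF assms, symmetric])
  finally show ?thesis .
qed

end
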